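(* Let $k$ have characteristic zero, $V$ have basis $x_1,\dots,x_n$ ($n\ge1$), $N\geq2$, $w$ a non-zero homogeneous potential of degree $N+1$, $A=A(w)$, $r_i=\partial_{x_i}(w)$, $R=\mathrm{span}\{r_i\}$. Fix $J\subset\{1,\dots,n\}$ with $(r_j)_{j\in J}$ a basis of $R$, dual basis $(r_j^* )_{j\in J}$ of $R^*$, and let $(x_i^* )$ be the dual basis of $V^*$. Consider the complex $C_w$: $$0\to A\otimes kc(w)\otimes A\xrightarrow{d_3}A\otimes R\otimes A\xrightarrow{d_2}A\otimes V\otimes A\xrightarrow{d_1}A\otimes A\to0$$ with $d_1(1\otimes v\otimes1)=v\otimes1-1\otimes v$, $d_2(1\otimes v_1\cdots v_N\otimes1)=\sum_{i}v_1\cdots v_{i-1}\otimes v_i\otimes v_{i+1}\cdots v_N$, $d_3(1\otimes c(w)\otimes1)=\sum_{i=1}^n x_i\otimes r_i\otimes1-1\otimes r_i\otimes x_i$; and the complex $C_w^\vee$: $$0\to A\otimes k1^*\otimes A\xrightarrow{d_1^*}A\otimes V^*\otimes A\xrightarrow{d_2^*}A\otimes R^*\otimes A\xrightarrow{d_3^*}A\otimes kc(w)^*\otimes A\to0$$ with $d_1^*(1^* )=\sum_i x_i\otimes x_i^*\otimes1-1\otimes x_i^*\otimes x_i$, $d_2^*(x_i^* )=\sum_{j\in J}\sum\big(\tfrac{\partial r_j}{\partial x_i}\big)_2\otimes r_j^*\otimes\big(\tfrac{\partial r_j}{\partial x_i}\big)_1$, and $d_3^*(r_i^* )=x_i\otimes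 c(w)^*\otimes1-1\otimes c(w)^*\otimes x_i+\sum_{j\notin J}r_i^*(r_j)\,(x_j\otimes c(w)^*\otimes1-1\otimes c(w)^*\otimes x_j)$ for $i\in J$. Define $A$-bimodule maps $f_0(1\otimes1)=c(w)^*$, $f_1(x_i)=r_i^*$ if $i\in J$ and $0$ if $i\notin J$, $f_2(r_i)=x_i^*$ ($i\in J$), $f_3(c(w))=1^*$, forming a diagram $f_3:A c(w)A\to A1^*A$, $f_2:ARA\to AV^*A$, $f_1:AVA\to AR^*A$, $f_0:AA\to Ac(w)^*A$. Then: (i) $f_1\circ d_2=d_2^*\circ f_2$; (ii) $f_2\circ d_3=d_1^*\circ f_3$ holds if and only if $\dim R=n$, and $f_0\circ d_1=d_3^*\circ f_1$ holds if and only if $\dim R=n$; (iii) if $C_w^\vee$ is exact at $A\otimes V^*\otimes A$ (equivalently $\mathrm{H}^1(A,A\otimes A)=0$ with outer bimodule structure), then $\dim R=n$.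
   Context: All tensor products are over $k$; elements $a\otimes v\otimes b$ of $A\otimes V\otimes A$ etc.; bimodule maps are determined by their values on $1\otimes(\cdot)\otimes 1$, written without the outer $1$'s. Cyclic derivative $\partial_x(p)=\sum_{p=uxv}vu$ and cyclic sum $c(a_1\cdots a_r)=\sum_i a_i\cdots a_ra_1\cdots a_{i-1}$ on monomials. The ordinary partial derivative $\frac{\partial}{\partial x}:T(V)\to T(V)\otimes T(V)$ is $\frac{\partial p}{\partial x}=\sum_{p=uxv}u\otimes v$ on monomials, written symbolically $\sum\big(\frac{\partial p}{\partial x}\big)_1\otimes\big(\frac{\partial p}{\partial x}\big)_2$ (images taken in $A\otimes A$). $A(w)=T(V)/(\partial_{x_1}w,\dots,\partial_{x_n}w)$. The complex $C_w^\vee$ is the image of $\mathrm{Hom}_{A\text{-}A}(C_w,A\otimes A)$ (outer bimodule structure on $A\otimes A$, resulting bimodule structure from the inner one, with Koszul sign convention) under the natural isomorphisms $\mathrm{Hom}_{A\text{-}A}(A\otimes F\otimes A,A\otimes A)\cong A\otimes F^*\otimes A$. *)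

theory Defs
  imports Main "HOL-Library.Function_Algebras"
begin

text \<open>Letters x_0,...,x_{n-1} are the naturals < n; monomials are words
  (nat list); elements of T(V) are coefficient functions nat list => k; elements of
  T(V) (x) T(V) are coefficient functions on pairs of words.  A free A-bimodule
  A (x) F (x) A with F having a basis indexed by a finite set B is represented by
  B-indexed families of elements of T(V)(x)T(V), taken modulo the kernel K of
  T(V)(x)T(V) -> A(x)A, i.e. K = I(x)T(V) + T(V)(x)I with I = (r_0,...,r_{n-1}).\<close>

type_synonym 'k ncp = "nat list \<Rightarrow> 'k"
type_synonym 'k tt = "nat list \<times> nat list \<Rightarrow> 'k"

inductive_set lspan :: "('a \<Rightarrow> 'k::comm_ring_1) set \<Rightarrow> ('a \<Rightarrow> 'k) set" for S where
  lspan_zero: "0 \<in> lspan S"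
| lspan_step: "x \<in> S \<Longrightarrow> y \<in> lspan S \<Longrightarrow> (\<lambda>a. c * x a + y a) \<in> lspan S"

definition mono :: "nat list \<Rightarrow> 'k::comm_ring_1 ncp" where
  "mono u = (\<lambda>v. if v = u then 1 else 0)"

definition ncmult :: "'k::comm_ring_1 ncp \<Rightarrow> 'k ncp \<Rightarrow> 'k ncp" where
  "ncmult p q = (\<lambda>a. \<Sum>i\<in>{0..length a}. p (take i a) * q (drop i a))"

text \<open>cyclic derivative: cycder w i = sum over w = u x_i v of v u\<close>
definition cycder :: "'k::comm_ring_1 ncp \<Rightarrow> nat \<Rightarrow> 'k ncp" where
  "cycder w i = (\<lambda>a. \<Sum>j\<in>{0..length a}. w (drop j a @ [i] @ take j a))"

definition pder :: "'k::comm_ring_1 ncp \<Rightarrow> nat \<Rightarrow> 'k tt" where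
  "pder p i = (\<lambda>(a, b). p (a @ [i] @ b))"

definition tens :: "'k::comm_ring_1 ncp \<Rightarrow> 'k ncp \<Rightarrow> 'k tt" where
  "tens p q = (\<lambda>(a, b). p a * q b)"

definition swap :: "'k tt \<Rightarrow> 'k tt" where
  "swap X = (\<lambda>(a, b). X (b, a))"

text \<open>act Y Z: (p (x) q) acting on (s (x) e (x) t) gives p s (x) e (x) t q\<close>
definition act :: "'k::comm_ring_1 tt \<Rightarrow> 'k tt \<Rightarrow> 'k tt" where
  "act Y Z = (\<lambda>(a, b). \<Sum>i\<in>{0..length a}. \<Sum>j\<in>{0..length b}.
      Y (take i a, drop j b) * Z (drop i a, take j b))"

text \<open>apply the bimodule map with generator images g (source basis index set B) to X\<close>
definition app :: "nat set \<Rightarrow> (nat \<Rightarrow> nat \<Rightarrow> 'k::comm_ring_1 tt) \<Rightarrow> (nat \<Rightarrow> 'k tt) \<Rightarrow> nat \<Rightarrow> 'k tt" where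
  "app B g X = (\<lambda>c. \<Sum>b\<in>B. act (X b) (g b c))"

definition fsupp :: "'k::zero tt \<Rightarrow> bool" where
  "fsupp X \<longleftrightarrow> finite {p. X p \<noteq> 0}"

text \<open>kernel of T(V)(x)T(V) -> A(w)(x)A(w)\<close>
definition idealK :: "nat \<Rightarrow> 'k::comm_ring_1 ncp \<Rightarrow> 'k tt set" where
  "idealK n w = lspan
     ({tens (ncmult (ncmult (mono u) (cycder w i)) (mono v)) (mono s) | u v s i. i < n}
    \<union> {tens (mono s) (ncmult (ncmult (mono u) (cycder w i)) (mono v)) | u v s i. i < n})"

definition eqmod :: "nat \<Rightarrow> 'k::comm_ring_1 ncp \<Rightarrow> nat set \<Rightarrow> (nat \<Rightarrow> 'k tt) \<Rightarrow> (nat \<Rightarrow> 'k tt) \<Rightarrow> bool" where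
  "eqmod n w C X Y \<longleftrightarrow> (\<forall>c\<in>C. X c - Y c \<in> idealK n w)"

definition homogeneous_of_degree :: "nat \<Rightarrow> nat \<Rightarrow> 'k::zero ncp \<Rightarrow> bool" where
  "homogeneous_of_degree n d w \<longleftrightarrow> (\<forall>a. w a \<noteq> 0 \<longrightarrow> length a = d \<and> (\<forall>x\<in>set a. x < n))"

text \<open>a potential is non-zero iff it is non-zero in T(V)/[T(V),T(V)]\<close>
definition nonzero_potential :: "'k::comm_ring_1 ncp \<Rightarrow> bool" where
  "nonzero_potential w \<longleftrightarrow> w \<notin> lspan {(\<lambda>a. mono (u @ v) a - mono (v @ u) a) | u v. True}"

definition lin_indep_on :: "nat set \<Rightarrow> (nat \<Rightarrow> 'k::comm_ring_1 ncp) \<Rightarrow> bool" where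
  "lin_indep_on J r \<longleftrightarrow> (\<forall>c. (\<forall>a. (\<Sum>j\<in>J. c j * r j a) = 0) \<longrightarrow> (\<forall>j\<in>J. c j = 0))"

definition xdiff :: "nat \<Rightarrow> 'k::comm_ring_1 tt" where
  "xdiff i = tens (mono [i]) (mono []) - tens (mono []) (mono [i])"

definition one_tt :: "'k::comm_ring_1 tt" where
  "one_tt = tens (mono []) (mono [])"

text \<open>The complex C_w. Basis indices: V by {..<n}, R by J, kc(w) and A(x)A by {0}.
  lam i j is the coefficient of r_j in r_i = sum_{j in J} lam i j r_j, so r_i^*(r_j) = lam j i.\<close>
definition d1 :: "nat \<Rightarrow> nat \<Rightarrow> 'k::comm_ring_1 tt" where
  "d1 i = (\<lambda>c. if c = 0 then xdiff i else 0)"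

definition d2 :: "'k::comm_ring_1 ncp \<Rightarrow> nat \<Rightarrow> nat \<Rightarrow> 'k tt" where
  "d2 w j = (\<lambda>i. pder (cycder w j) i)"

definition d3 :: "nat \<Rightarrow> (nat \<Rightarrow> nat \<Rightarrow> 'k::comm_ring_1) \<Rightarrow> nat \<Rightarrow> nat \<Rightarrow> 'k tt" where
  "d3 n lam c = (\<lambda>j. \<Sum>i<n. (\<lambda>p. lam i j * xdiff i p))"

text \<open>The complex C_w^vee. Basis indices: 1^* and c(w)^* by {0}, V^* by {..<n}, R^* by J.\<close>
definition d1s :: "nat \<Rightarrow> nat \<Rightarrow> 'k::comm_ring_1 tt" where
  "d1s c = (\<lambda>i. xdiff i)"

definition d2s :: "'k::comm_ring_1 ncp \<Rightarrow> nat \<Rightarrow> nat \<Rightarrow> 'k tt" where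
  "d2s w i = (\<lambda>j. swap (pder (cycder w j) i))"

definition d3s :: "nat \<Rightarrow> nat set \<Rightarrow> (nat \<Rightarrow> nat \<Rightarrow> 'k::comm_ring_1) \<Rightarrow> nat \<Rightarrow> nat \<Rightarrow> 'k tt" where
  "d3s n J lam i = (\<lambda>c. if c = 0 then
      xdiff i + (\<Sum>j\<in>{..<n} - J. (\<lambda>p. lam j i * xdiff j p)) else 0)"

definition f0 :: "nat \<Rightarrow> nat \<Rightarrow> 'k::comm_ring_1 tt" where
  "f0 c = (\<lambda>c'. if c' = 0 then one_tt else 0)"

definition f1 :: "nat set \<Rightarrow> nat \<Rightarrow> nat \<Rightarrow> 'k::comm_ring_1 tt" where
  "f1 J i = (\<lambda>j. if i \<in> J \<and> j = i then one_tt else 0)"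

definition f2 :: "nat \<Rightarrow> nat \<Rightarrow> 'k::comm_ring_1 tt" where
  "f2 j = (\<lambda>i. if i = j then one_tt else 0)"

definition f3 :: "nat \<Rightarrow> nat \<Rightarrow> 'k::comm_ring_1 tt" where
  "f3 c = (\<lambda>c'. if c' = 0 then one_tt else 0)"

definition exact_at_Vstar :: "nat \<Rightarrow> 'k::comm_ring_1 ncp \<Rightarrow> nat set \<Rightarrow> bool" where
  "exact_at_Vstar n w J \<longleftrightarrow>
     (\<forall>X. (\<forall>i<n. fsupp (X i)) \<and> eqmod n w J (app {..<n} (d2s w) X) (\<lambda>_. 0)
        \<longrightarrow> (\<exists>Y. fsupp Y \<and> eqmod n w {..<n} X (app {0} d1s (\<lambda>_. Y))))"

end

theory Submission
  imports Defs
begin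

lemma sum_fun_app: "(\<Sum>i\<in>A. f i) x = (\<Sum>i\<in>A. f i x)"
  by (induction A rule: infinite_finite_induct) auto

lemma dsum:
  assumes "finite A" "finite B" "i0 \<in> A" "j0 \<in> B"
  shows "(\<Sum>i\<in>A. \<Sum>j\<in>B. if i = i0 \<and> j = j0 then y else 0) = y"
proof -
  have "\<And>i. (\<Sum>j\<in>B. if i = i0 \<and> j = j0 then y else 0) = (if i = i0 then y else 0)"
    using assms by (case_tac "i = i0") simp_all
  then show ?thesis using assms by simp
qed

lemma one_tt_app: "one_tt (a, b) = (if a = [] \<and> b = [] then 1 else 0)"
  by (simp add: one_tt_def tens_def mono_def)

lemma act_one_right: "act Y one_tt = Y"
proof (rule ext, clarify)
  fix a b :: "nat list"
  have "act Y one_tt (a, b) = (\<Sum>i\<in>{0..length a}. \<Sum>j\<in>{0..length b}.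
      (if i = length a \<and> j = 0 then Y (a, b) else 0))"
    unfolding act_def by (auto simp: one_tt_app intro!: sum.cong)
  also have "\<dots> = Y (a, b)" by (rule dsum) auto
  finally show "act Y one_tt (a, b) = Y (a, b)" .
qed

lemma act_one_left: "act one_tt Z = Z"
proof (rule ext, clarify)
  fix a b :: "nat list"
  have "act one_tt Z (a, b) = (\<Sum>i\<in>{0..length a}. \<Sum>j\<in>{0..length b}.
      (if i = 0 \<and> j = length b then Z (a, b) else 0))"
    unfolding act_def by (auto simp: one_tt_app intro!: sum.cong)
  also have "\<dots> = Z (a, b)" by (rule dsum) auto
  finally show "act one_tt Z (a, b) = Z (a, b)" .
qed

lemma act_smul_one_left: "act (\<lambda>p. c * one_tt p) Z = (\<lambda>p. c * Z p)"
proof (rule ext, clarify)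
  fix a b :: "nat list"
  have "act (\<lambda>p. c * one_tt p) Z (a, b) = (\<Sum>i\<in>{0..length a}. \<Sum>j\<in>{0..length b}.
      (if i = 0 \<and> j = length b then c * Z (a, b) else 0))"
    unfolding act_def by (auto simp: one_tt_app intro!: sum.cong)
  also have "\<dots> = c * Z (a, b)" by (rule dsum) auto
  finally show "act (\<lambda>p. c * one_tt p) Z (a, b) = c * Z (a, b)" .
qed

lemma act_zero_right[simp]: "act Y 0 = 0"
  unfolding act_def by (auto simp: fun_eq_iff)
lemma act_zero_left[simp]: "act 0 Y = 0"
  unfolding act_def by (auto simp: fun_eq_iff)

definition cyc_sum :: "('k::comm_ring_1) ncp \<Rightarrow> nat list \<Rightarrow> 'k" where
  "cyc_sum w t = (\<Sum>k<length t. w (rotate k t))"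

lemma cyc_sum_rotate1: "cyc_sum w (rotate1 t) = cyc_sum w t"
proof -
  have "cyc_sum w (rotate1 t) = (\<Sum>k<length t. w (rotate (Suc k) t))"
    unfolding cyc_sum_def by (simp add: rotate1_rotate_swap)
  also have "\<dots> = cyc_sum w t"
  proof -
    have "(\<Sum>k<Suc (length t). w (rotate k t)) = w (rotate 0 t) + (\<Sum>k<length t. w (rotate (Suc k) t))"
      by (rule sum.lessThan_Suc_shift)
    moreover have "(\<Sum>k<Suc (length t). w (rotate k t)) = (\<Sum>k<length t. w (rotate k t)) + w (rotate (length t) t)"
      by simp
    ultimately show ?thesis unfolding cyc_sum_def by (simp del: rotate_Suc)
  qed
  finally show ?thesis .
qed

lemma cyc_sum_rotate: "cyc_sum w (rotate m t) = cyc_sum w t"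
  by (induction m) (auto simp: cyc_sum_rotate1)

lemma cycder_cyc: "cycder w j s = cyc_sum w (s @ [j])"
proof -
  have "cycder w j s = (\<Sum>k<Suc (length s). w (drop k s @ [j] @ take k s))"
    unfolding cycder_def by (simp add: atLeast0AtMost lessThan_Suc_atMost)
  also have "\<dots> = cyc_sum w (s @ [j])"
    unfolding cyc_sum_def
    by (auto simp: rotate_drop_take intro!: sum.cong)
  finally show ?thesis .
qed

lemma cycder_sym: "cycder w j (a @ [c] @ b) = cycder w c (b @ [j] @ a)"
proof -
  have "b @ [j] @ a @ [c] = rotate (length (a @ [c])) ((a @ [c]) @ (b @ [j]))"
    by (simp only: rotate_append) simp
  then have "cyc_sum w (b @ [j] @ a @ [c]) = cyc_sum w (a @ [c] @ b @ [j])"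
    using cyc_sum_rotate[of w "length (a @ [c])" "(a @ [c]) @ (b @ [j])"] by simp
  then show ?thesis by (simp add: cycder_cyc)
qed

lemma lspan_eval: "(\<forall>x\<in>S. x p = 0) \<Longrightarrow> z \<in> lspan S \<Longrightarrow> z p = 0"
proof -
  assume h: "\<forall>x\<in>S. x p = 0"
  show "z \<in> lspan S \<Longrightarrow> z p = 0"
    by (induction rule: lspan.induct) (auto simp: h)
qed

lemma ncmult_short_right: "(\<forall>x. length x < N \<longrightarrow> q x = 0) \<Longrightarrow> length a < N \<Longrightarrow> ncmult p q a = 0"
  unfolding ncmult_def by (intro sum.neutral) auto

lemma ncmult_short_left: "(\<forall>x. length x < N \<longrightarrow> p x = 0) \<Longrightarrow> length a < N \<Longrightarrow> ncmult p q a = 0"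
  unfolding ncmult_def by (intro sum.neutral) auto

lemma cycder_short:
  assumes "homogeneous_of_degree n (N + 1) w" "length a < N"
  shows "cycder w i a = 0"
  unfolding cycder_def
proof (intro sum.neutral ballI)
  fix j assume "j \<in> {0..length a}"
  have "length (drop j a @ [i] @ take j a) \<noteq> N + 1" using assms(2) by auto
  then show "w (drop j a @ [i] @ take j a) = 0"
    using assms(1) unfolding homogeneous_of_degree_def by blast
qed

lemma gen_short:
  assumes "homogeneous_of_degree n (N + 1) w" "length a < N"
  shows "ncmult (ncmult (mono u) (cycder w i)) (mono v) a = 0"
proof -
  have "\<forall>x. length x < N \<longrightarrow> ncmult (mono u) (cycder w i) x = 0"
    using ncmult_short_right[of N "cycder w i"] cycder_short[OF assms(1)] by blast
  then show ?thesis using ncmult_short_left assms(2) by blast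
qed

lemma idealK_short:
  assumes "homogeneous_of_degree n (N + 1) w" "X \<in> idealK n w" "length a < N" "length b < N"
  shows "X (a, b) = 0"
  using assms(2) unfolding idealK_def
  by (rule lspan_eval[rotated]) (auto simp: tens_def gen_short[OF assms(1)] assms(3,4))

lemma zero_in_K: "0 \<in> idealK n w"
  unfolding idealK_def by (rule lspan_zero)

lemma xdiff_m: "xdiff m ([m], []) = 1" "xdiff m ([], []) = 0"
  by (simp_all add: xdiff_def tens_def mono_def)

theorem proposition2p4:
  fixes n N :: nat and w :: "nat list \<Rightarrow> 'k::field_char_0"
    and J :: "nat set" and lam :: "nat \<Rightarrow> nat \<Rightarrow> 'k"
  assumes "n \<ge> 1" and "N \<ge> 2"
    and "homogeneous_of_degree n (N + 1) w"
    and "nonzero_potential w"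
    and "J \<subseteq> {..<n}"
    and "lin_indep_on J (cycder w)"
    and "\<forall>i<n. cycder w i = (\<lambda>a. \<Sum>j\<in>J. lam i j * cycder w j a)"
  shows "(\<forall>j\<in>J. eqmod n w J (app {..<n} (f1 J) (d2 w j)) (app {..<n} (d2s w) (f2 j)))
    \<and> ((\<forall>c\<in>{0::nat}. eqmod n w {..<n} (app J f2 (d3 n lam c)) (app {0} d1s (f3 c)))
         \<longleftrightarrow> card J = n)
    \<and> ((\<forall>i<n. eqmod n w {0} (app {0} f0 (d1 i)) (app J (d3s n J lam) (f1 J i)))
         \<longleftrightarrow> card J = n)
    \<and> (exact_at_Vstar n w J \<longrightarrow> card J = n)"
proof -
  note hom = assms(3)
  have finJ: "finite J" using assms(5) finite_subset by blast
  have Kpt: "X ([m], []) = 0" "X ([], []) = 0" if "X \<in> idealK n w" for X :: "'k tt" and m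
    using idealK_short[OF hom that] assms(2) by auto
  have cardJ: "card J = n \<longleftrightarrow> J = {..<n}"
    using assms(5) card_subset_eq[of "{..<n}" J] by auto
  have notin: "\<exists>m<n. m \<notin> J" if "card J \<noteq> n" using that cardJ assms(5) by auto
  have lamJ: "lam i j = (if i = j then 1 else 0)" if ij: "i \<in> J" "j \<in> J" for i j
  proof -
    define c where "c = (\<lambda>j. lam i j - (if i = j then 1 else 0))"
    have "(\<Sum>j\<in>J. c j * cycder w j a) = 0" for a
    proof -
      have "(\<Sum>j\<in>J. c j * cycder w j a) = (\<Sum>j\<in>J. lam i j * cycder w j a)
            - (\<Sum>j\<in>J. (if i = j then cycder w j a else 0))"
        unfolding c_def left_diff_distrib sum_subtractf by (auto intro!: sum.cong)
      also have "\<dots> = cycder w i a - cycder w i a"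
      proof -
        have "i < n" using ij assms(5) by auto
        then have "cycder w i a = (\<Sum>j\<in>J. lam i j * cycder w j a)" using assms(7) by simp
        moreover have "(\<Sum>j\<in>J. if i = j then cycder w j a else 0) = cycder w i a"
          using finJ ij by (simp add: sum.delta)
        ultimately show ?thesis by simp
      qed
      finally show ?thesis by simp
    qed
    then have "c j = 0" using assms(6) ij unfolding lin_indep_on_def by blast
    then show ?thesis unfolding c_def by auto
  qed
  have P1: "\<forall>j\<in>J. eqmod n w J (app {..<n} (f1 J) (d2 w j)) (app {..<n} (d2s w) (f2 j))"
  proof (intro ballI, unfold eqmod_def, intro ballI)
    fix j c assume j: "j \<in> J" and c: "c \<in> J"
    have jn: "j < n" "c < n" using j c assms(5) by auto
    have L: "app {..<n} (f1 J) (d2 w j) c = pder (cycder w j) c"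
    proof -
      have "app {..<n} (f1 J) (d2 w j) c = (\<Sum>i<n. if i = c then pder (cycder w j) c else 0)"
        unfolding app_def by (intro sum.cong) (auto simp: f1_def d2_def act_one_right c)
      then show ?thesis using jn by simp
    qed
    have R: "app {..<n} (d2s w) (f2 j) c = swap (pder (cycder w c) j)"
    proof -
      have "app {..<n} (d2s w) (f2 j) c = (\<Sum>i<n. if i = j then swap (pder (cycder w c) j) else 0)"
        unfolding app_def by (intro sum.cong) (auto simp: f2_def d2s_def act_one_left)
      then show ?thesis using jn by simp
    qed
    have E: "pder (cycder w j) c = swap (pder (cycder w c) j)"
      by (auto simp: fun_eq_iff pder_def swap_def cycder_sym[simplified])
    show "app {..<n} (f1 J) (d2 w j) c - app {..<n} (d2s w) (f2 j) c \<in> idealK n w"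
      unfolding L R E by (simp add: zero_in_K)
  qed
  have P2: "(\<forall>c\<in>{0::nat}. eqmod n w {..<n} (app J f2 (d3 n lam c)) (app {0} d1s (f3 c)))
         \<longleftrightarrow> card J = n"
  proof
    assume h: "\<forall>c\<in>{0::nat}. eqmod n w {..<n} (app J f2 (d3 n lam c)) (app {0} d1s (f3 c))"
    show "card J = n"
    proof (rule ccontr)
      assume "card J \<noteq> n"
      then obtain m where m: "m < n" "m \<notin> J" using notin by blast
      have L: "app J f2 (d3 n lam 0) m = 0"
        unfolding app_def using m by (intro sum.neutral) (auto simp: f2_def)
      have R: "app {0} d1s (f3 0) m = xdiff m"
        by (simp add: app_def f3_def d1s_def act_one_left)
      have "app J f2 (d3 n lam 0) m - app {0} d1s (f3 0) m \<in> idealK n w"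
        using h m unfolding eqmod_def by auto
      then have "0 - xdiff m \<in> idealK n w" by (simp only: L R)
      from Kpt(1)[OF this, of m] show False by (simp add: xdiff_m)
    qed
  next
    assume "card J = n"
    then have J: "J = {..<n}" using cardJ by simp
    show "\<forall>c\<in>{0::nat}. eqmod n w {..<n} (app J f2 (d3 n lam c)) (app {0} d1s (f3 c))"
    proof (unfold eqmod_def, intro ballI)
      fix c c' :: nat assume c: "c \<in> {0}" and c': "c' \<in> {..<n}"
      have L: "app J f2 (d3 n lam c) c' = d3 n lam c c'"
      proof -
        have "app J f2 (d3 n lam c) c' = (\<Sum>j\<in>J. if j = c' then d3 n lam c c' else 0)"
          unfolding app_def by (intro sum.cong) (auto simp: f2_def act_one_right)
        then show ?thesis using J c' by simp
      qed
      have D: "d3 n lam c c' = xdiff c'"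
      proof -
        have "d3 n lam c c' = (\<Sum>i<n. if i = c' then xdiff i else 0)"
          unfolding d3_def using J c' by (intro sum.cong) (auto simp: lamJ fun_eq_iff)
        then show ?thesis using c' by simp
      qed
      have R: "app {0} d1s (f3 c) c' = xdiff c'"
        using c by (simp add: app_def f3_def d1s_def act_one_left)
      show "app J f2 (d3 n lam c) c' - app {0} d1s (f3 c) c' \<in> idealK n w"
        unfolding L D R by (simp add: zero_in_K)
    qed
  qed
  have P3: "(\<forall>i<n. eqmod n w {0} (app {0} f0 (d1 i)) (app J (d3s n J lam) (f1 J i)))
         \<longleftrightarrow> card J = n"
  proof
    assume h: "\<forall>i<n. eqmod n w {0} (app {0} f0 (d1 i)) (app J (d3s n J lam) (f1 J i))"
    show "card J = n"
    proof (rule ccontr)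
      assume "card J \<noteq> n"
      then obtain m where m: "m < n" "m \<notin> J" using notin by blast
      have R: "app J (d3s n J lam) (f1 J m) 0 = 0"
        unfolding app_def using m by (intro sum.neutral) (auto simp: f1_def)
      have L: "app {0} f0 (d1 m) 0 = xdiff m"
        by (simp add: app_def f0_def d1_def act_one_right)
      have "app {0} f0 (d1 m) 0 - app J (d3s n J lam) (f1 J m) 0 \<in> idealK n w"
        using h m unfolding eqmod_def by auto
      then have "xdiff m - 0 \<in> idealK n w" by (simp only: L R)
      from Kpt(1)[OF this, of m] show False by (simp add: xdiff_m)
    qed
  next
    assume "card J = n"
    then have J: "J = {..<n}" using cardJ by simp
    show "\<forall>i<n. eqmod n w {0} (app {0} f0 (d1 i)) (app J (d3s n J lam) (f1 J i))"
    proof (intro allI impI, unfold eqmod_def, intro ballI)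
      fix i c :: nat assume i: "i < n" and c: "c \<in> {0}"
      have L: "app {0} f0 (d1 i) c = xdiff i"
        using c by (simp add: app_def f0_def d1_def act_one_right)
      have R: "app J (d3s n J lam) (f1 J i) c = xdiff i"
      proof -
        have "app J (d3s n J lam) (f1 J i) c = (\<Sum>j\<in>J. if j = i then xdiff i else 0)"
          unfolding app_def using J c by (intro sum.cong) (auto simp: f1_def d3s_def act_one_left)
        then show ?thesis using J i by simp
      qed
      show "app {0} f0 (d1 i) c - app J (d3s n J lam) (f1 J i) c \<in> idealK n w"
        unfolding L R by (simp add: zero_in_K)
    qed
  qed
  have P4: "exact_at_Vstar n w J \<longrightarrow> card J = n"
  proof (intro impI, rule ccontr)
    assume ex: "exact_at_Vstar n w J" and "card J \<noteq> n"
    then obtain m where m: "m < n" "m \<notin> J" using notin by blast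
    define cc where "cc = (\<lambda>i. if i = m then 1 else if i \<in> J then - lam m i else (0::'k))"
    define X where "X = (\<lambda>i. (\<lambda>p. cc i * one_tt p))"
    have dep: "(\<Sum>i<n. cc i * cycder w i s) = 0" for s
    proof -
      have "(\<Sum>i<n. cc i * cycder w i s) = cc m * cycder w m s + (\<Sum>i\<in>{..<n} - {m}. cc i * cycder w i s)"
        using m by (intro sum.remove) auto
      also have "(\<Sum>i\<in>{..<n} - {m}. cc i * cycder w i s) = (\<Sum>i\<in>J. - lam m i * cycder w i s)"
        using m assms(5) unfolding cc_def
        by (intro sum.mono_neutral_cong_right) auto
      also have "cc m * cycder w m s = (\<Sum>j\<in>J. lam m j * cycder w j s)"
      proof -
        have "cycder w m = (\<lambda>a. \<Sum>j\<in>J. lam m j * cycder w j a)" using assms(7) m by blast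
        then have "cycder w m s = (\<Sum>j\<in>J. lam m j * cycder w j s)" by (rule fun_cong[where x = s, THEN trans]) simp
        then show ?thesis unfolding cc_def by simp
      qed
      finally show ?thesis by (simp add: sum_negf)
    qed
    have fs: "\<forall>i<n. fsupp (X i)"
    proof (intro allI impI)
      fix i
      have "{p. X i p \<noteq> 0} \<subseteq> {([], [])}"
        unfolding X_def by (auto simp: one_tt_app split: if_splits)
      then show "fsupp (X i)" unfolding fsupp_def using finite_subset by blast
    qed
    have d2: "eqmod n w J (app {..<n} (d2s w) X) (\<lambda>_. 0)"
    proof (unfold eqmod_def, intro ballI)
      fix j assume j: "j \<in> J"
      have "app {..<n} (d2s w) X j = 0"
      proof (rule ext, clarify)
        fix a b :: "nat list"
        have sy: "\<And>i. cycder w j (b @ i # a) = cycder w i (a @ j # b)"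
          using cycder_sym[of w j b _ a] by simp
        have "app {..<n} (d2s w) X j (a, b) = (\<Sum>i<n. cc i * cycder w i (a @ [j] @ b))"
          unfolding app_def X_def
          by (simp add: act_smul_one_left sum_fun_app d2s_def swap_def pder_def sy)
        then show "app {..<n} (d2s w) X j (a, b) = 0 (a, b)" using dep by simp
      qed
      then show "app {..<n} (d2s w) X j - (\<lambda>_. 0) j \<in> idealK n w"
        using zero_in_K by (simp add: zero_fun_def)
    qed
    obtain Y where "eqmod n w {..<n} X (app {0} d1s (\<lambda>_. Y))"
      using ex fs d2 unfolding exact_at_Vstar_def by blast
    then have K: "X m - app {0} d1s (\<lambda>_. Y) m \<in> idealK n w" using m unfolding eqmod_def by auto
    have "app {0} d1s (\<lambda>_. Y) m ([], []) = 0"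
      by (simp add: app_def d1s_def act_def xdiff_m)
    moreover have "X m ([], []) = 1" by (simp add: X_def cc_def one_tt_app)
    ultimately show False using Kpt(2)[OF K] by simp
  qed
  show ?thesis using P1 P2 P3 P4 by blast
qed

end
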